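(* Let $\mathcal{C}$ be a simplicial complex on ground set $[n]$. Then $\mathcal{C}$ is unimodular if and only if its Alexander dual $\mathcal{C}^*$ is unimodular.
   Context: A simplicial complex on $[n]$ is a family of subsets of $[n]$ closed under subsets; facets are inclusion-maximal faces. $\mathcal{C}^*=\{S\subseteq[n]:[n]\setminus S\notin\mathcal{C}\}$, on ground set $[n]$. $\mathcal{A}_{\mathcal{C}}$ is the $0/1$ matrix with columns indexed by $\mathbf{i}\in\{1,2\}^n$ and rows indexed by pairs $(F,\mathbf{e})$ with $F$ a facet and $\mathbf{e}\in\{1,2\}^F$; entry $1$ iff $\mathbf{e}=\mathbf{i}|_F$. An integer matrix is unimodular if every circuit (nonzero integer kernel vector with coprime entries and inclusion-minimal support) has entries in $\{0,\pm1\}$. $\mathcal{C}$ is unimodular if $\mathcal{A}_{\mathcal{C}}$ is. *)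

theory Defs
  imports "HOL-Library.FuncSet"
begin

definition in_int_kernel :: "'r set \<Rightarrow> 'c set \<Rightarrow> ('r \<Rightarrow> 'c \<Rightarrow> int) \<Rightarrow> ('c \<Rightarrow> int) \<Rightarrow> bool" where
  "in_int_kernel R Cl a u \<longleftrightarrow>
     (\<forall>c. c \<notin> Cl \<longrightarrow> u c = 0) \<and> (\<forall>r\<in>R. (\<Sum>c\<in>Cl. a r c * u c) = 0)"

definition vec_support :: "'c set \<Rightarrow> ('c \<Rightarrow> int) \<Rightarrow> 'c set" where
  "vec_support Cl u = {c\<in>Cl. u c \<noteq> 0}"

definition is_circuit :: "'r set \<Rightarrow> 'c set \<Rightarrow> ('r \<Rightarrow> 'c \<Rightarrow> int) \<Rightarrow> ('c \<Rightarrow> int) \<Rightarrow> bool" where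
  "is_circuit R Cl a u \<longleftrightarrow>
     in_int_kernel R Cl a u \<and> vec_support Cl u \<noteq> {} \<and> Gcd (u ` Cl) = 1 \<and>
     (\<forall>v. in_int_kernel R Cl a v \<and> vec_support Cl v \<noteq> {} \<and> vec_support Cl v \<subseteq> vec_support Cl u
          \<longrightarrow> vec_support Cl v = vec_support Cl u)"

definition unimodular_matrix :: "'r set \<Rightarrow> 'c set \<Rightarrow> ('r \<Rightarrow> 'c \<Rightarrow> int) \<Rightarrow> bool" where
  "unimodular_matrix R Cl a \<longleftrightarrow>
     (\<forall>u. is_circuit R Cl a u \<longrightarrow> (\<forall>c. u c \<in> {-1, 0, 1}))"

definition simplicial_complex :: "nat \<Rightarrow> nat set set \<Rightarrow> bool" where
  "simplicial_complex n C \<longleftrightarrow>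
     (\<forall>F\<in>C. F \<subseteq> {1..n}) \<and> (\<forall>F\<in>C. \<forall>G. G \<subseteq> F \<longrightarrow> G \<in> C)"

definition facets :: "nat set set \<Rightarrow> nat set set" where
  "facets C = {F\<in>C. \<forall>G\<in>C. F \<subseteq> G \<longrightarrow> G = F}"

definition alexander_dual :: "nat \<Rightarrow> nat set set \<Rightarrow> nat set set" where
  "alexander_dual n C = {S. S \<subseteq> {1..n} \<and> {1..n} - S \<notin> C}"

definition cx_columns :: "nat \<Rightarrow> (nat \<Rightarrow> nat) set" where
  "cx_columns n = PiE {1..n} (\<lambda>_. {1, 2})"

definition cx_rows :: "nat set set \<Rightarrow> (nat set \<times> (nat \<Rightarrow> nat)) set" where
  "cx_rows C = {(F, e). F \<in> facets C \<and> e \<in> PiE F (\<lambda>_. {1, 2})}"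

definition cx_entry :: "nat set \<times> (nat \<Rightarrow> nat) \<Rightarrow> (nat \<Rightarrow> nat) \<Rightarrow> int" where
  "cx_entry r i = (if snd r = restrict i (fst r) then 1 else 0)"

definition unimodular_complex :: "nat \<Rightarrow> nat set set \<Rightarrow> bool" where
  "unimodular_complex n C \<longleftrightarrow> unimodular_matrix (cx_rows C) (cx_columns n) cx_entry"

end

theory Submission
  imports Defs
begin


definition sg :: "nat \<Rightarrow> int" where "sg b = (if b = 1 then 1 else -1)"
definition chi :: "nat set \<Rightarrow> (nat \<Rightarrow> nat) \<Rightarrow> int" where
  "chi S i = (\<Prod>k\<in>S. sg (i k))"

lemma sg_sq[simp]: "sg b * sg b = 1" by (simp add: sg_def)

lemma chi_pm: "chi S i = 1 \<or> chi S i = -1"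
  unfolding chi_def
proof (induction S rule: infinite_finite_induct)
  case (insert x F) then show ?case by (auto simp: sg_def)
qed auto

lemma chi_sq[simp]: "chi S i * chi S i = 1"
  using chi_pm[of S i] by auto

lemma sum_pow_chi:
  assumes "finite A"
    and "\<forall>k\<in>A. i k \<in> {1,2}" "\<forall>k\<in>A. j k \<in> {1,2}"
  shows "(\<Sum>T\<in>Pow A. chi T i * chi T j) = (if \<forall>k\<in>A. i k = j k then 2 ^ card A else 0)"
proof -
  define t where "t k = sg (i k) * sg (j k)" for k
  have "(\<Sum>T\<in>Pow A. chi T i * chi T j) = (\<Sum>T\<in>Pow A. (\<Prod>k\<in>T. t k) * (\<Prod>k\<in>A-T. 1))"
    by (simp add: chi_def t_def prod.distrib)
  also have "\<dots> = (\<Prod>k\<in>A. t k + 1)"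
    by (rule prod_add[symmetric]) (use assms in auto)
  also have "\<dots> = (\<Prod>k\<in>A. if i k = j k then 2 else 0)"
  proof (rule prod.cong)
    fix k assume "k \<in> A"
    then have "i k \<in> {1,2}" "j k \<in> {1,2}" using assms by auto
    then show "t k + 1 = (if i k = j k then 2 else 0)" by (auto simp: t_def sg_def)
  qed simp
  also have "\<dots> = (if \<forall>k\<in>A. i k = j k then 2 ^ card A else 0)"
  proof (cases "\<forall>k\<in>A. i k = j k")
    case True then show ?thesis by simp
  next
    case False
    then obtain k where "k \<in> A" "i k \<noteq> j k" by auto
    then show ?thesis using assms(1) False by (auto intro!: prod_zero)
  qed
  finally show ?thesis .
qed

lemma chi_as_prod:
  assumes "finite A" "S \<subseteq> A"
  shows "chi S i = (\<Prod>k\<in>A. if k \<in> S then sg (i k) else 1)"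
  unfolding chi_def using assms
  by (simp add: prod.If_cases Int_absorb1)

lemma sum_E_chi:
  assumes "S \<subseteq> {1..n}" "T \<subseteq> {1..n}"
  shows "(\<Sum>i\<in>cx_columns n. chi S i * chi T i) = (if S = T then 2 ^ n else 0)"
proof -
  define h where "h k b = (if k \<in> S then sg b else 1) * (if k \<in> T then sg b else 1)" for k b
  have "(\<Sum>i\<in>cx_columns n. chi S i * chi T i) = (\<Sum>i\<in>cx_columns n. \<Prod>k\<in>{1..n}. h k (i k))"
    by (simp add: chi_as_prod[OF _ assms(1)] chi_as_prod[OF _ assms(2)] h_def prod.distrib)
  also have "\<dots> = (\<Prod>k\<in>{1..n}. \<Sum>b\<in>{1,2}. h k b)"
    unfolding cx_columns_def by (rule prod_sum_PiE[symmetric]) auto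
  also have "\<dots> = (\<Prod>k\<in>{1..n}. if (k \<in> S \<longleftrightarrow> k \<in> T) then 2 else 0)"
    by (rule prod.cong) (auto simp: h_def sg_def)
  also have "\<dots> = (if S = T then 2 ^ n else 0)"
  proof (cases "S = T")
    case True then show ?thesis by simp
  next
    case False
    then obtain k where "k \<in> {1..n}" "\<not> (k \<in> S \<longleftrightarrow> k \<in> T)" using assms by blast
    then show ?thesis using False by (auto intro!: prod_zero)
  qed
  finally show ?thesis .
qed

lemma sum_K_chi:
  assumes "i \<in> cx_columns n" "j \<in> cx_columns n"
  shows "(\<Sum>T\<in>Pow {1..n}. chi T i * chi T j) = (if i = j then 2 ^ n else 0)"
proof -
  have "(\<forall>k\<in>{1..n}. i k = j k) \<longleftrightarrow> i = j"
    using assms unfolding cx_columns_def by (auto intro: PiE_ext)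
  then show ?thesis
    using sum_pow_chi[of "{1..n}" i j] assms unfolding cx_columns_def by (auto simp: PiE_iff)
qed



lemma ker_comb:
  assumes "in_int_kernel R Cl a u" "in_int_kernel R Cl a v"
  shows "in_int_kernel R Cl a (\<lambda>c. \<alpha> * u c + \<beta> * v c)"
proof -
  have "(\<Sum>c\<in>Cl. a r c * (\<alpha> * u c + \<beta> * v c)) = \<alpha> * (\<Sum>c\<in>Cl. a r c * u c) + \<beta> * (\<Sum>c\<in>Cl. a r c * v c)" for r
    by (simp add: algebra_simps sum.distrib sum_distrib_left)
  then show ?thesis using assms unfolding in_int_kernel_def by auto
qed

lemma fredholm:
  assumes "finite J"
    and closed: "\<And>x y \<alpha> \<beta>. P x \<Longrightarrow> P y \<Longrightarrow> P (\<lambda>c. \<alpha> * x c + \<beta> * y c)"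
  shows "\<forall>f. (\<forall>x y \<alpha> \<beta>. P x \<longrightarrow> P y \<longrightarrow> f (\<lambda>c. \<alpha> * x c + \<beta> * y c) = \<alpha> * f x + \<beta> * f y)
     \<longrightarrow> (\<forall>x. P x \<longrightarrow> (\<forall>j\<in>J. x j = 0) \<longrightarrow> f x = (0::int))
     \<longrightarrow> (\<exists>m c. m \<noteq> 0 \<and> (\<forall>x. P x \<longrightarrow> m * f x = (\<Sum>j\<in>J. c j * x j)))"
  using assms(1)
proof (induction J rule: finite_induct)
  case empty
  show ?case
  proof (intro allI impI)
    fix f :: "('a \<Rightarrow> int) \<Rightarrow> int"
    assume "\<forall>x. P x \<longrightarrow> (\<forall>j\<in>{}. x j = 0) \<longrightarrow> f x = 0"
    then show "\<exists>m c. m \<noteq> 0 \<and> (\<forall>x. P x \<longrightarrow> m * f x = (\<Sum>j\<in>{}. c j * x j))"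
      by (intro exI[of _ "1::int"]) auto
  qed
next
  case (insert a J)
  show ?case
  proof (intro allI impI)
    fix f :: "('a \<Rightarrow> int) \<Rightarrow> int"
    assume lin: "\<forall>x y \<alpha> \<beta>. P x \<longrightarrow> P y \<longrightarrow> f (\<lambda>c. \<alpha> * x c + \<beta> * y c) = \<alpha> * f x + \<beta> * f y"
      and van: "\<forall>x. P x \<longrightarrow> (\<forall>j\<in>insert a J. x j = 0) \<longrightarrow> f x = 0"
    show "\<exists>m c. m \<noteq> 0 \<and> (\<forall>x. P x \<longrightarrow> m * f x = (\<Sum>j\<in>insert a J. c j * x j))"
    proof (cases "\<exists>x0. P x0 \<and> (\<forall>j\<in>J. x0 j = 0) \<and> x0 a \<noteq> 0")
      case True
      then obtain x0 where x0: "P x0" "\<forall>j\<in>J. x0 j = 0" "x0 a \<noteq> 0" by blast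
      define \<alpha> where "\<alpha> = x0 a"
      define f' where "f' x = \<alpha> * f x - f x0 * x a" for x
      have lin': "\<forall>x y \<alpha>' \<beta>. P x \<longrightarrow> P y \<longrightarrow> f' (\<lambda>c. \<alpha>' * x c + \<beta> * y c) = \<alpha>' * f' x + \<beta> * f' y"
        using lin by (auto simp: f'_def algebra_simps)
      have van': "\<forall>x. P x \<longrightarrow> (\<forall>j\<in>J. x j = 0) \<longrightarrow> f' x = 0"
      proof (intro allI impI)
        fix x assume Px: "P x" and xJ: "\<forall>j\<in>J. x j = 0"
        define y where "y = (\<lambda>c. \<alpha> * x c + (- x a) * x0 c)"
        have Py: "P y" unfolding y_def using closed Px x0(1) .
        have "\<forall>j\<in>insert a J. y j = 0" using xJ x0(2) by (auto simp: y_def \<alpha>_def)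
        then have "f y = 0" using van Py by blast
        moreover have "f y = \<alpha> * f x + (- x a) * f x0" unfolding y_def using lin Px x0(1) by blast
        ultimately show "f' x = 0" by (simp add: f'_def algebra_simps)
      qed
      obtain m c where mc: "m \<noteq> 0" "\<forall>x. P x \<longrightarrow> m * f' x = (\<Sum>j\<in>J. c j * x j)"
        using insert.IH lin' van' by blast
      show ?thesis
      proof (intro exI conjI allI impI)
        show "m * \<alpha> \<noteq> 0" using mc(1) x0(3) by (simp add: \<alpha>_def)
        fix x assume Px: "P x"
        have "(\<Sum>j\<in>insert a J. (c(a := m * f x0)) j * x j) = m * f x0 * x a + (\<Sum>j\<in>J. c j * x j)"
          using insert.hyps by (simp add: sum.insert) (rule sum.cong, auto)
        also have "\<dots> = m * \<alpha> * f x" using mc(2) Px by (simp add: f'_def algebra_simps)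
        finally show "m * \<alpha> * f x = (\<Sum>j\<in>insert a J. (c(a := m * f x0)) j * x j)" by simp
      qed
    next
      case False
      have van': "\<forall>x. P x \<longrightarrow> (\<forall>j\<in>J. x j = 0) \<longrightarrow> f x = 0"
        using False van by auto
      obtain m c where mc: "m \<noteq> 0" "\<forall>x. P x \<longrightarrow> m * f x = (\<Sum>j\<in>J. c j * x j)"
        using insert.IH lin van' by blast
      show ?thesis
      proof (intro exI conjI allI impI)
        show "m \<noteq> 0" by fact
        fix x assume Px: "P x"
        have "(\<Sum>j\<in>insert a J. (c(a := 0)) j * x j) = (\<Sum>j\<in>J. c j * x j)"
          using insert.hyps by (simp add: sum.insert) (rule sum.cong, auto)
        then show "m * f x = (\<Sum>j\<in>insert a J. (c(a := 0)) j * x j)" using mc(2) Px by simp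
      qed
    qed
  qed
qed

definition minimal_kv where
  "minimal_kv R Cl a c \<longleftrightarrow> in_int_kernel R Cl a c \<and>
     (\<forall>v. in_int_kernel R Cl a v \<and> vec_support Cl v \<noteq> {} \<and> vec_support Cl v \<subseteq> vec_support Cl c
          \<longrightarrow> vec_support Cl v = vec_support Cl c)"

lemma ex_minimal:
  assumes "finite Cl" "in_int_kernel R Cl a u" "d \<in> Cl" "u d \<noteq> 0"
  shows "\<exists>c. minimal_kv R Cl a c \<and> c d \<noteq> 0 \<and> vec_support Cl c \<subseteq> vec_support Cl u"
  using assms(2-4)
proof (induction "card (vec_support Cl u)" arbitrary: u rule: less_induct)
  case less
  show ?case
  proof (cases "minimal_kv R Cl a u")
    case True then show ?thesis using less.prems by auto
  next
    case False
    then obtain v where v: "in_int_kernel R Cl a v" "vec_support Cl v \<noteq> {}"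
      "vec_support Cl v \<subseteq> vec_support Cl u" "vec_support Cl v \<noteq> vec_support Cl u"
      using less.prems unfolding minimal_kv_def by blast
    have fin: "finite (vec_support Cl u)" using assms(1) by (simp add: vec_support_def)
    have psub: "vec_support Cl v \<subset> vec_support Cl u" using v by auto
    show ?thesis
    proof (cases "v d \<noteq> 0")
      case True
      have "card (vec_support Cl v) < card (vec_support Cl u)" using psub fin by (rule psubset_card_mono[rotated])
      then obtain c where "minimal_kv R Cl a c" "c d \<noteq> 0" "vec_support Cl c \<subseteq> vec_support Cl v"
        using less.hyps[OF _ v(1) less.prems(2) True] by blast
      then show ?thesis using v(3) by blast
    next
      case False
      obtain k where k: "k \<in> vec_support Cl v" using v(2) by blast
      define u' where "u' = (\<lambda>c. v k * u c + (- u k) * v c)"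
      have ku': "in_int_kernel R Cl a u'" unfolding u'_def by (rule ker_comb) (use less.prems v in auto)
      have u'd: "u' d \<noteq> 0" using False less.prems k by (auto simp: u'_def vec_support_def)
      have sub: "vec_support Cl u' \<subseteq> vec_support Cl u - {k}"
      proof
        fix x assume x: "x \<in> vec_support Cl u'"
        have "v x \<noteq> 0 \<Longrightarrow> x \<in> vec_support Cl u" using v(3) x by (auto simp: vec_support_def)
        then show "x \<in> vec_support Cl u - {k}" using x by (auto simp: u'_def vec_support_def)
      qed
      have "k \<in> vec_support Cl u" using k v(3) by auto
      then have "card (vec_support Cl u') < card (vec_support Cl u)"
        using fin sub by (meson card_Diff1_less card_mono finite_Diff le_less_trans)
      then obtain c where "minimal_kv R Cl a c" "c d \<noteq> 0" "vec_support Cl c \<subseteq> vec_support Cl u'"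
        using less.hyps[OF _ ku' less.prems(2) u'd] by blast
      then show ?thesis using sub by blast
    qed
  qed
qed

lemma minimal_abs_eq:
  assumes um: "unimodular_matrix R Cl a" and fin: "finite Cl"
    and mc: "minimal_kv R Cl a c" and x: "x \<in> vec_support Cl c" and y: "y \<in> vec_support Cl c"
  shows "\<bar>c x\<bar> = \<bar>c y\<bar>"
proof -
  have kc: "in_int_kernel R Cl a c" using mc by (simp add: minimal_kv_def)
  define g where "g = Gcd (c ` Cl)"
  have xCl: "x \<in> Cl" "c x \<noteq> 0" using x by (auto simp: vec_support_def)
  have g0: "g \<noteq> 0" unfolding g_def using xCl by (auto simp: Gcd_0_iff)
  have gdvd: "g dvd c z" for z
  proof (cases "z \<in> Cl")
    case True then show ?thesis unfolding g_def by (simp add: Gcd_dvd)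
  next
    case False then show ?thesis using kc by (simp add: in_int_kernel_def)
  qed
  define c' where "c' z = c z div g" for z
  have cz: "c z = g * c' z" for z using gdvd[of z] by (simp add: c'_def)
  have kc': "in_int_kernel R Cl a c'"
  proof -
    have "(\<Sum>z\<in>Cl. a r z * c' z) = 0" if "r \<in> R" for r
    proof -
      have "g * (\<Sum>z\<in>Cl. a r z * c' z) = (\<Sum>z\<in>Cl. a r z * c z)"
        by (simp add: sum_distrib_left cz algebra_simps)
      also have "\<dots> = 0" using kc that by (simp add: in_int_kernel_def)
      finally show ?thesis using g0 by simp
    qed
    moreover have "c' z = 0" if "z \<notin> Cl" for z using kc that by (simp add: in_int_kernel_def c'_def)
    ultimately show ?thesis by (simp add: in_int_kernel_def)
  qed
  have supp: "vec_support Cl c' = vec_support Cl c"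
    using g0 by (auto simp: vec_support_def cz)
  have gcd1: "Gcd (c' ` Cl) = 1"
  proof -
    define h where "h = Gcd (c' ` Cl)"
    have "h * g dvd c z" if "z \<in> Cl" for z
      unfolding cz h_def using that by (simp add: Gcd_dvd mult.commute)
    then have "h * g dvd Gcd (c ` Cl)" by (intro Gcd_greatest) auto
    then have "h * g dvd g" by (simp add: g_def)
    then have "h dvd 1" using g0
      by (metis dvd_mult_cancel_right mult_1)
    moreover have "h \<ge> 0" by (simp add: h_def)
    ultimately show ?thesis unfolding h_def by simp
  qed
  have "is_circuit R Cl a c'"
    unfolding is_circuit_def using kc' supp gcd1 mc x unfolding minimal_kv_def by auto
  then have "\<forall>z. c' z \<in> {-1,0,1}" using um unfolding unimodular_matrix_def by blast
  moreover have "c' x \<noteq> 0" "c' y \<noteq> 0" using x y by (auto simp: vec_support_def cz)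
  ultimately have "\<bar>c' x\<bar> = 1" "\<bar>c' y\<bar> = 1" 
    by (metis insertE singletonD abs_minus_cancel abs_one)+
  then show ?thesis by (simp add: cz abs_mult)
qed



locale chars =
  fixes E :: "'c set" and K :: "'k set" and b :: "'k \<Rightarrow> 'c \<Rightarrow> int" and N :: int
  assumes finE: "finite E" and finK: "finite K" and Npos: "N > 0"
    and orth1: "\<And>S T. S \<in> K \<Longrightarrow> T \<in> K \<Longrightarrow> (\<Sum>c\<in>E. b S c * b T c) = (if S = T then N else 0)"
    and orth2: "\<And>i j. i \<in> E \<Longrightarrow> j \<in> E \<Longrightarrow> (\<Sum>S\<in>K. b S i * b S j) = (if i = j then N else 0)"
begin

lemma bv_ker:
  assumes "K1 \<subseteq> K" "S \<in> K" "S \<notin> K1"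
  shows "in_int_kernel K1 E b (\<lambda>c. if c \<in> E then b S c else 0)"
  unfolding in_int_kernel_def
proof (intro conjI ballI allI impI)
  fix T assume T: "T \<in> K1"
  have "(\<Sum>c\<in>E. b T c * (if c \<in> E then b S c else 0)) = (\<Sum>c\<in>E. b T c * b S c)"
    by (rule sum.cong) auto
  also have "\<dots> = 0" using orth1[of T S] assms T by auto
  finally show "(\<Sum>c\<in>E. b T c * (if c \<in> E then b S c else 0)) = 0" .
qed simp

lemma ortho:
  assumes "K1 \<subseteq> K" "in_int_kernel K1 E b u" "in_int_kernel (K - K1) E b w"
  shows "(\<Sum>c\<in>E. u c * w c) = 0"
proof -
  have inner: "(\<Sum>d\<in>E. w d * (\<Sum>S\<in>K. b S c * b S d)) = N * w c" if c: "c \<in> E" for c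
  proof -
    have "(\<Sum>d\<in>E. w d * (\<Sum>S\<in>K. b S c * b S d)) = (\<Sum>d\<in>E. if d = c then N * w c else 0)"
      by (rule sum.cong) (use c orth2 in auto)
    also have "\<dots> = N * w c" using c finE by simp
    finally show ?thesis .
  qed
  have "N * (\<Sum>c\<in>E. u c * w c) = (\<Sum>c\<in>E. u c * (N * w c))"
    by (simp add: sum_distrib_left algebra_simps)
  also have "\<dots> = (\<Sum>c\<in>E. u c * (\<Sum>d\<in>E. w d * (\<Sum>S\<in>K. b S c * b S d)))"
    by (rule sum.cong) (simp_all add: inner)
  also have "\<dots> = (\<Sum>c\<in>E. \<Sum>d\<in>E. \<Sum>S\<in>K. (b S c * u c) * (b S d * w d))"
    by (simp add: sum_distrib_left algebra_simps)
  also have "\<dots> = (\<Sum>S\<in>K. \<Sum>c\<in>E. \<Sum>d\<in>E. (b S c * u c) * (b S d * w d))"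
    by (simp add: sum.swap[of _ E K] sum.swap[of _ E K])
  also have "\<dots> = (\<Sum>S\<in>K. (\<Sum>c\<in>E. b S c * u c) * (\<Sum>d\<in>E. b S d * w d))"
    by (simp add: sum_product)
  also have "\<dots> = 0"
  proof (rule sum.neutral, rule ballI)
    fix S assume "S \<in> K"
    then have "S \<in> K1 \<or> S \<in> K - K1" by auto
    then show "(\<Sum>c\<in>E. b S c * u c) * (\<Sum>d\<in>E. b S d * w d) = 0"
      using assms(2,3) unfolding in_int_kernel_def by auto
  qed
  finally show ?thesis using Npos by simp
qed

lemma perp_in:
  assumes "K1 \<subseteq> K" "\<forall>c. c \<notin> E \<longrightarrow> \<psi> c = 0"
    and perp: "\<forall>x. in_int_kernel K1 E b x \<longrightarrow> (\<Sum>c\<in>E. \<psi> c * x c) = 0"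
  shows "in_int_kernel (K - K1) E b \<psi>"
  unfolding in_int_kernel_def
proof (intro conjI ballI)
  fix S assume S: "S \<in> K - K1"
  have "(\<Sum>c\<in>E. b S c * \<psi> c) = (\<Sum>c\<in>E. \<psi> c * (if c \<in> E then b S c else 0))"
    by (rule sum.cong) auto
  also have "\<dots> = 0" using perp bv_ker[of K1 S] assms S by blast
  finally show "(\<Sum>c\<in>E. b S c * \<psi> c) = 0" .
qed (use assms in auto)

theorem dual_unimodular:
  assumes K1: "K1 \<subseteq> K" and um: "unimodular_matrix K1 E b"
  shows "unimodular_matrix (K - K1) E b"
  unfolding unimodular_matrix_def
proof (intro allI impI)
  fix w c assume wc: "is_circuit (K - K1) E b w"
  let ?V = "in_int_kernel K1 E b"
  let ?W = "in_int_kernel (K - K1) E b"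
  define D where "D = vec_support E w"
  have kw: "?W w" and Dne: "D \<noteq> {}" and g1: "Gcd (w ` E) = 1"
    and wmin: "\<And>v. ?W v \<Longrightarrow> vec_support E v \<noteq> {} \<Longrightarrow> vec_support E v \<subseteq> D \<Longrightarrow> vec_support E v = D"
    using wc unfolding is_circuit_def D_def by blast+
  have DE: "D \<subseteq> E" by (auto simp: D_def vec_support_def)
  have finD: "finite D" using DE finE finite_subset by blast
  have eqabs: "\<bar>w d\<bar> = \<bar>w e\<bar>" if d: "d \<in> D" and e: "e \<in> D" for d e
  proof (cases "d = e")
    case True then show ?thesis by simp
  next
    case False
    define J where "J = D - {d, e}"
    have "\<exists>v. ?V v \<and> v d \<noteq> 0 \<and> (\<forall>j\<in>J. v j = 0)"
    proof (rule ccontr)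
      assume nex: "\<not> ?thesis"
      have fJ: "finite J" using finD by (simp add: J_def)
      have F: "\<forall>f. (\<forall>x y \<alpha> \<beta>. ?V x \<longrightarrow> ?V y \<longrightarrow> f (\<lambda>c. \<alpha> * x c + \<beta> * y c) = \<alpha> * f x + \<beta> * f y)
     \<longrightarrow> (\<forall>x. ?V x \<longrightarrow> (\<forall>j\<in>J. x j = 0) \<longrightarrow> f x = (0::int))
     \<longrightarrow> (\<exists>m c. m \<noteq> 0 \<and> (\<forall>x. ?V x \<longrightarrow> m * f x = (\<Sum>j\<in>J. c j * x j)))"
        by (rule fredholm[OF fJ]) (rule ker_comb)
      have van: "\<forall>x. ?V x \<longrightarrow> (\<forall>j\<in>J. x j = 0) \<longrightarrow> x d = 0" using nex by blast
      have "\<exists>m c. m \<noteq> 0 \<and> (\<forall>x. ?V x \<longrightarrow> m * x d = (\<Sum>j\<in>J. c j * x j))"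
        using F[rule_format, of "\<lambda>x. x d"] van by simp
      then obtain m cc where m: "m \<noteq> 0" and mc: "\<And>x. ?V x \<Longrightarrow> m * x d = (\<Sum>j\<in>J. cc j * x j)"
        by blast
      define \<psi> where "\<psi> y = (if y = d then m else if y \<in> J then - cc y else 0)" for y
      have dE: "d \<in> E" "e \<in> E" using d e DE by auto
      have dJ: "d \<notin> J" "e \<notin> J" "J \<subseteq> E" using DE by (auto simp: J_def)
      have out: "\<forall>y. y \<notin> E \<longrightarrow> \<psi> y = 0" using dE dJ by (auto simp: \<psi>_def)
      have perp: "\<forall>x. ?V x \<longrightarrow> (\<Sum>y\<in>E. \<psi> y * x y) = 0"
      proof (intro allI impI)
        fix x assume Vx: "?V x"
        have "(\<Sum>y\<in>E. \<psi> y * x y) = (\<Sum>y\<in>insert d J. \<psi> y * x y)"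
          by (rule sum.mono_neutral_right) (use finE dE dJ in \<open>auto simp: \<psi>_def\<close>)
        also have "\<dots> = m * x d + (\<Sum>y\<in>J. - cc y * x y)"
        proof -
          have "(\<Sum>y\<in>J. \<psi> y * x y) = (\<Sum>y\<in>J. - cc y * x y)"
            by (rule sum.cong) (use dJ in \<open>auto simp: \<psi>_def\<close>)
          moreover have "finite J" using finD by (simp add: J_def)
          ultimately show ?thesis using dJ by (simp add: \<psi>_def)
        qed
        also have "\<dots> = 0" using mc[OF Vx] by (simp add: sum_negf)
        finally show "(\<Sum>y\<in>E. \<psi> y * x y) = 0" .
      qed
      have Wpsi: "?W \<psi>" by (rule perp_in[OF K1 out perp])
      have "d \<in> vec_support E \<psi>" using dE m by (auto simp: vec_support_def \<psi>_def)
      moreover have "vec_support E \<psi> \<subseteq> D"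
        using dJ d by (auto simp: vec_support_def \<psi>_def J_def)
      ultimately have "vec_support E \<psi> = D" using wmin[OF Wpsi] by blast
      moreover have "e \<notin> vec_support E \<psi>" using False dJ by (auto simp: vec_support_def \<psi>_def)
      ultimately show False using e by blast
    qed
    then obtain v where v: "?V v" "v d \<noteq> 0" "\<forall>j\<in>J. v j = 0" by blast
    have dE: "d \<in> E" "e \<in> E" using d e DE by auto
    obtain c where c: "minimal_kv K1 E b c" "c d \<noteq> 0" "vec_support E c \<subseteq> vec_support E v"
      using ex_minimal[OF finE v(1) dE(1) v(2)] by blast
    have kc: "?V c" using c(1) by (simp add: minimal_kv_def)
    have "(\<Sum>y\<in>E. c y * w y) = 0" by (rule ortho[OF K1 kc kw])
    moreover have "(\<Sum>y\<in>E. c y * w y) = (\<Sum>y\<in>{d,e}. c y * w y)"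
    proof (rule sum.mono_neutral_right)
      show "\<forall>y\<in>E - {d, e}. c y * w y = 0"
      proof
        fix y assume y: "y \<in> E - {d, e}"
        show "c y * w y = 0"
        proof (cases "w y = 0")
          case False
          then have "y \<in> J" using y by (auto simp: J_def D_def vec_support_def)
          then have "v y = 0" using v(3) by auto
          then have "c y = 0" using c(3) y by (auto simp: vec_support_def)
          then show ?thesis by simp
        qed simp
      qed
    qed (use finE dE in auto)
    ultimately have sum0: "c d * w d + c e * w e = 0" using False by simp
    have wd: "w d \<noteq> 0" "w e \<noteq> 0" using d e by (auto simp: D_def vec_support_def)
    have "c e \<noteq> 0"
    proof
      assume "c e = 0"
      then have "c d * w d = 0" using sum0 by simp
      then show False using c(2) wd by simp
    qed
    have "\<bar>c d\<bar> = \<bar>c e\<bar>"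
      by (rule minimal_abs_eq[OF um finE c(1)]) (use c(2) dE \<open>c e \<noteq> 0\<close> in \<open>simp_all add: vec_support_def\<close>)
    moreover have "\<bar>c d\<bar> * \<bar>w d\<bar> = \<bar>c e\<bar> * \<bar>w e\<bar>"
    proof -
      have "c d * w d = - (c e * w e)" using sum0 by simp
      then have "\<bar>c d * w d\<bar> = \<bar>c e * w e\<bar>" by simp
      then show ?thesis by (simp add: abs_mult)
    qed
    ultimately show ?thesis using c(2) \<open>c e \<noteq> 0\<close> by simp
  qed
  obtain d0 where d0: "d0 \<in> D" using Dne by blast
  define g where "g = \<bar>w d0\<bar>"
  have gpos: "g > 0" using d0 by (auto simp: g_def D_def vec_support_def)
  have "g dvd w y" if "y \<in> E" for y
  proof (cases "y \<in> D")
    case True then show ?thesis using eqabs[OF d0 True] by (simp add: g_def)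
  next
    case False then show ?thesis using that by (auto simp: D_def vec_support_def)
  qed
  then have "g dvd Gcd (w ` E)" by (intro Gcd_greatest) auto
  then have g_1: "g = 1" using g1 gpos by simp
  show "w c \<in> {-1, 0, 1}"
  proof (cases "c \<in> D")
    case True
    then have "\<bar>w c\<bar> = 1" using eqabs[OF d0 True] g_1 by (simp add: g_def)
    then show ?thesis by (auto simp: abs_if split: if_splits)
  next
    case False
    then have "w c = 0" using kw by (auto simp: D_def vec_support_def in_int_kernel_def)
    then show ?thesis by simp
  qed
qed

end


lemma twist_unimod:
  assumes eq: "\<And>x. in_int_kernel R Cl a x \<longleftrightarrow> in_int_kernel R' Cl a' (\<lambda>c. \<sigma> c * x c)"
    and sq: "\<And>c. \<sigma> c * \<sigma> c = (1::int)"
    and um: "unimodular_matrix R' Cl a'"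
  shows "unimodular_matrix R Cl a"
  unfolding unimodular_matrix_def
proof (intro allI impI)
  fix u c assume uc: "is_circuit R Cl a u"
  define u' where "u' c = \<sigma> c * u c" for c
  have pm: "\<sigma> c = 1 \<or> \<sigma> c = -1" for c using sq[of c] by (simp add: square_eq_1_iff)
  have abs1: "\<bar>\<sigma> c\<bar> = 1" for c using pm[of c] by auto
  have inv: "\<sigma> c * u' c = u c" for c by (simp add: u'_def mult.assoc[symmetric] sq)
  have nz: "\<sigma> c \<noteq> 0" for c using sq[of c] by auto
  have supp: "vec_support Cl (\<lambda>c. \<sigma> c * v c) = vec_support Cl v" for v
    using nz by (simp add: vec_support_def)
  have gcd: "Gcd (u' ` Cl) = Gcd (u ` Cl)"
  proof -
    have "Gcd (u' ` Cl) = Gcd ((\<lambda>k. \<bar>k\<bar>) ` u' ` Cl)" by (simp only: Gcd_abs_eq)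
    also have "(\<lambda>k. \<bar>k\<bar>) ` u' ` Cl = (\<lambda>k. \<bar>k\<bar>) ` u ` Cl"
      by (simp add: image_image u'_def abs_mult abs1)
    also have "Gcd \<dots> = Gcd (u ` Cl)" by (simp only: Gcd_abs_eq)
    finally show ?thesis .
  qed
  have "is_circuit R' Cl a' u'"
    unfolding is_circuit_def
  proof (intro conjI allI impI)
    show "in_int_kernel R' Cl a' u'" using uc eq unfolding is_circuit_def u'_def by blast
    show "vec_support Cl u' \<noteq> {}" using uc supp[of u] unfolding is_circuit_def u'_def by simp
    show "Gcd (u' ` Cl) = 1" using gcd uc unfolding is_circuit_def by simp
    fix v assume v: "in_int_kernel R' Cl a' v \<and> vec_support Cl v \<noteq> {} \<and> vec_support Cl v \<subseteq> vec_support Cl u'"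
    define v' where "v' c = \<sigma> c * v c" for c
    have "(\<lambda>c. \<sigma> c * v' c) = v" by (rule ext) (simp add: v'_def mult.assoc[symmetric] sq)
    then have kv': "in_int_kernel R Cl a v'" using eq[of v'] v by simp
    have sv: "vec_support Cl v' = vec_support Cl v" using supp[of v] by (simp add: v'_def[abs_def])
    have su: "vec_support Cl u' = vec_support Cl u" using supp[of u] by (simp add: u'_def[abs_def])
    have umin: "\<And>w. in_int_kernel R Cl a w \<and> vec_support Cl w \<noteq> {} \<and> vec_support Cl w \<subseteq> vec_support Cl u
          \<Longrightarrow> vec_support Cl w = vec_support Cl u"
      using uc unfolding is_circuit_def by blast
    have "vec_support Cl v' = vec_support Cl u"
      by (rule umin) (use kv' sv su v in auto)
    then show "vec_support Cl v = vec_support Cl u'" using sv su by simp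
  qed
  then have "u' c \<in> {-1,0,1}" using um unfolding unimodular_matrix_def by blast
  then show "u c \<in> {-1,0,1}" using inv[of c] pm[of c]
    by (elim disjE insertE) auto
qed

lemma same_ker_unimod:
  assumes "\<And>x. in_int_kernel R Cl a x \<longleftrightarrow> in_int_kernel R' Cl a' x"
  shows "unimodular_matrix R Cl a \<longleftrightarrow> unimodular_matrix R' Cl a'"
  using twist_unimod[of R Cl a R' a' "\<lambda>_. 1"] twist_unimod[of R' Cl a' R a "\<lambda>_. 1"] assms by auto



lemma sc_sub: "simplicial_complex n C \<Longrightarrow> C \<subseteq> Pow {1..n}"
  by (auto simp: simplicial_complex_def)

lemma facet_exists:
  assumes sc: "simplicial_complex n C" and S: "S \<in> C"
  shows "\<exists>F\<in>facets C. S \<subseteq> F"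
proof -
  let ?M = "{G\<in>C. S \<subseteq> G}"
  have "finite C" using sc_sub[OF sc] by (rule finite_subset) simp
  then have "finite ?M" by (rule finite_subset[rotated]) auto
  moreover have "?M \<noteq> {}" using S by auto
  ultimately obtain F where F: "F \<in> ?M" "\<forall>G\<in>?M. F \<subseteq> G \<longrightarrow> F = G"
    using finite_has_maximal by (metis (no_types, lifting))
  have "F \<in> facets C" unfolding facets_def using F by auto
  then show ?thesis using F by auto
qed

lemma cols_fin: "finite (cx_columns n)"
  by (simp add: cx_columns_def finite_PiE)

lemma row_sum:
  "(\<Sum>i\<in>cx_columns n. cx_entry (F, e) i * x i) = (\<Sum>i\<in>{i\<in>cx_columns n. restrict i F = e}. x i)"
  unfolding sum.inter_filter[OF cols_fin] by (rule sum.cong) (auto simp: cx_entry_def)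

lemma ker_equiv:
  assumes sc: "simplicial_complex n C"
  shows "in_int_kernel (cx_rows C) (cx_columns n) cx_entry x \<longleftrightarrow> in_int_kernel C (cx_columns n) chi x"
proof
  assume k: "in_int_kernel (cx_rows C) (cx_columns n) cx_entry x"
  show "in_int_kernel C (cx_columns n) chi x"
    unfolding in_int_kernel_def
  proof (intro conjI ballI)
    fix S assume S: "S \<in> C"
    obtain F where F: "F \<in> facets C" "S \<subseteq> F" using facet_exists[OF sc S] by blast
    have Fsub: "F \<subseteq> {1..n}" using F sc by (auto simp: facets_def simplicial_complex_def)
    let ?T = "PiE F (\<lambda>_. {1::nat, 2})"
    have img: "(\<lambda>i. restrict i F) ` cx_columns n \<subseteq> ?T"
      using Fsub by (auto simp: cx_columns_def PiE_iff)
    have finT: "finite ?T" using Fsub by (intro finite_PiE) (auto intro: finite_subset)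
    have "(\<Sum>i\<in>cx_columns n. chi S i * x i)
        = (\<Sum>e\<in>?T. \<Sum>i\<in>{i\<in>cx_columns n. restrict i F = e}. chi S i * x i)"
      by (rule sum.group[OF cols_fin finT img, symmetric])
    also have "\<dots> = (\<Sum>e\<in>?T. chi S e * (\<Sum>i\<in>{i\<in>cx_columns n. restrict i F = e}. x i))"
    proof (rule sum.cong[OF refl])
      fix e assume e: "e \<in> ?T"
      have "chi S i = chi S e" if "restrict i F = e" for i
        unfolding chi_def using that F(2) by (intro prod.cong) auto
      then show "(\<Sum>i\<in>{i\<in>cx_columns n. restrict i F = e}. chi S i * x i)
          = chi S e * (\<Sum>i\<in>{i\<in>cx_columns n. restrict i F = e}. x i)"
        by (simp add: sum_distrib_left)
    qed
    also have "\<dots> = 0"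
    proof (rule sum.neutral, rule ballI)
      fix e assume e: "e \<in> ?T"
      have "(F, e) \<in> cx_rows C" using F e by (simp add: cx_rows_def)
      then have "(\<Sum>i\<in>cx_columns n. cx_entry (F, e) i * x i) = 0" using k by (simp add: in_int_kernel_def)
      then show "chi S e * (\<Sum>i\<in>{i\<in>cx_columns n. restrict i F = e}. x i) = 0" by (simp add: row_sum)
    qed
    finally show "(\<Sum>i\<in>cx_columns n. chi S i * x i) = 0" .
  qed (use k in \<open>simp add: in_int_kernel_def\<close>)
next
  assume k: "in_int_kernel C (cx_columns n) chi x"
  show "in_int_kernel (cx_rows C) (cx_columns n) cx_entry x"
    unfolding in_int_kernel_def
  proof (intro conjI ballI)
    fix r assume r: "r \<in> cx_rows C"
    then obtain F e where r': "r = (F, e)" "F \<in> facets C" "e \<in> PiE F (\<lambda>_. {1::nat,2})"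
      by (auto simp: cx_rows_def)
    have FC: "F \<in> C" using r' by (simp add: facets_def)
    have Fsub: "F \<subseteq> {1..n}" using FC sc by (auto simp: simplicial_complex_def)
    have finF: "finite F" using Fsub by (auto intro: finite_subset)
    have ind: "(\<Sum>T\<in>Pow F. chi T i * chi T e) = (if restrict i F = e then 2 ^ card F else 0)"
      if i: "i \<in> cx_columns n" for i
    proof -
      have "(\<forall>k\<in>F. i k = e k) \<longleftrightarrow> restrict i F = e"
        using r'(3) by (auto simp: PiE_iff extensional_def restrict_def)
      moreover have "\<forall>k\<in>F. i k \<in> {1,2}" using i Fsub by (auto simp: cx_columns_def PiE_iff)
      moreover have "\<forall>k\<in>F. e k \<in> {1,2}" using r'(3) by (auto simp: PiE_iff)
      ultimately show ?thesis using sum_pow_chi[OF finF, of i e] by simp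
    qed
    have "2 ^ card F * (\<Sum>i\<in>{i\<in>cx_columns n. restrict i F = e}. x i)
        = (\<Sum>i\<in>cx_columns n. (if restrict i F = e then 2 ^ card F else 0) * x i)"
      unfolding sum_distrib_left sum.inter_filter[OF cols_fin] by (rule sum.cong) auto
    also have "\<dots> = (\<Sum>i\<in>cx_columns n. (\<Sum>T\<in>Pow F. chi T i * chi T e) * x i)"
      by (rule sum.cong) (simp_all add: ind)
    also have "\<dots> = (\<Sum>T\<in>Pow F. chi T e * (\<Sum>i\<in>cx_columns n. chi T i * x i))"
      by (simp add: sum_distrib_left sum_distrib_right sum.swap[of _ "Pow F"] algebra_simps)
    also have "\<dots> = 0"
    proof (rule sum.neutral, rule ballI)
      fix T assume "T \<in> Pow F"
      then have "T \<in> C" using FC sc by (auto simp: simplicial_complex_def)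
      then show "chi T e * (\<Sum>i\<in>cx_columns n. chi T i * x i) = 0" using k by (simp add: in_int_kernel_def)
    qed
    finally have "(\<Sum>i\<in>{i\<in>cx_columns n. restrict i F = e}. x i) = 0" by simp
    then show "(\<Sum>i\<in>cx_columns n. cx_entry r i * x i) = 0" by (simp add: r' row_sum)
  qed (use k in \<open>simp add: in_int_kernel_def\<close>)
qed



lemma dual_sc:
  assumes "simplicial_complex n C"
  shows "simplicial_complex n (alexander_dual n C)"
  using assms unfolding simplicial_complex_def alexander_dual_def
  by (auto) (metis Diff_mono order_refl)

lemma chi_twist:
  assumes "T \<subseteq> {1..n}"
  shows "chi T c * (chi {1..n} c * y) = chi ({1..n} - T) c * y"
proof -
  have "chi {1..n} c = chi ({1..n} - T) c * chi T c"
    unfolding chi_def using assms by (rule prod.subset_diff) simp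
  then have "chi T c * chi {1..n} c = chi ({1..n} - T) c" by (simp add: algebra_simps)
  then show ?thesis by (simp add: mult.assoc[symmetric])
qed

lemma twist_ker:
  assumes sc: "simplicial_complex n C"
  shows "in_int_kernel (alexander_dual n C) (cx_columns n) chi x \<longleftrightarrow>
         in_int_kernel (Pow {1..n} - C) (cx_columns n) chi (\<lambda>c. chi {1..n} c * x c)"
proof -
  have supp: "(chi {1..n} c * x c = 0) \<longleftrightarrow> x c = 0" for c using chi_pm[of "{1..n}" c] by auto
  have A: "(\<forall>S\<in>alexander_dual n C. (\<Sum>c\<in>cx_columns n. chi S c * x c) = 0) \<longleftrightarrow>
        (\<forall>T\<in>Pow {1..n} - C. (\<Sum>c\<in>cx_columns n. chi T c * (chi {1..n} c * x c)) = 0)"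
  proof
    assume h: "\<forall>S\<in>alexander_dual n C. (\<Sum>c\<in>cx_columns n. chi S c * x c) = 0"
    show "\<forall>T\<in>Pow {1..n} - C. (\<Sum>c\<in>cx_columns n. chi T c * (chi {1..n} c * x c)) = 0"
    proof
      fix T assume T: "T \<in> Pow {1..n} - C"
      then have "{1..n} - T \<in> alexander_dual n C"
        by (auto simp: alexander_dual_def double_diff)
      moreover have "T \<subseteq> {1..n}" using T by auto
      ultimately show "(\<Sum>c\<in>cx_columns n. chi T c * (chi {1..n} c * x c)) = 0"
      proof -
        assume a1: "{1..n} - T \<in> alexander_dual n C" and a2: "T \<subseteq> {1..n}"
        have "(\<Sum>c\<in>cx_columns n. chi T c * (chi {1..n} c * x c)) = (\<Sum>c\<in>cx_columns n. chi ({1..n} - T) c * x c)"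
          by (rule sum.cong[OF refl], rule chi_twist[OF a2])
        then show ?thesis using h a1 by simp
      qed
    qed
  next
    assume h: "\<forall>T\<in>Pow {1..n} - C. (\<Sum>c\<in>cx_columns n. chi T c * (chi {1..n} c * x c)) = 0"
    show "\<forall>S\<in>alexander_dual n C. (\<Sum>c\<in>cx_columns n. chi S c * x c) = 0"
    proof
      fix S assume S: "S \<in> alexander_dual n C"
      then have T: "{1..n} - S \<in> Pow {1..n} - C" "S \<subseteq> {1..n}" by (auto simp: alexander_dual_def)
      have "{1..n} - ({1..n} - S) = S" using T(2) by auto
      have "(\<Sum>c\<in>cx_columns n. chi ({1..n} - S) c * (chi {1..n} c * x c)) = (\<Sum>c\<in>cx_columns n. chi S c * x c)"
      proof (rule sum.cong[OF refl])
        fix c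
        have "chi ({1..n} - S) c * (chi {1..n} c * x c) = chi ({1..n} - ({1..n} - S)) c * x c"
          by (rule chi_twist) auto
        then show "chi ({1..n} - S) c * (chi {1..n} c * x c) = chi S c * x c"
          using \<open>{1..n} - ({1..n} - S) = S\<close> by simp
      qed
      then show "(\<Sum>c\<in>cx_columns n. chi S c * x c) = 0"
        using h[rule_format, OF T(1)] by simp
    qed
  qed
  show ?thesis unfolding in_int_kernel_def using A supp by auto
qed

theorem proposition3p7:
  fixes n :: nat and C :: "nat set set"
  assumes "simplicial_complex n C"
  shows "unimodular_complex n C \<longleftrightarrow> unimodular_complex n (alexander_dual n C)"
proof -
  interpret chars "cx_columns n" "Pow {1..n}" chi "2 ^ n"
    apply unfold_locales
        apply (rule cols_fin)
       apply simp
      apply simp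
     apply (rule sum_E_chi; simp)
    apply (rule sum_K_chi; simp)
    done
  have sc: "simplicial_complex n C" by fact
  have sub: "C \<subseteq> Pow {1..n}" using sc_sub[OF sc] .
  have e1: "unimodular_complex n C \<longleftrightarrow> unimodular_matrix C (cx_columns n) chi"
    unfolding unimodular_complex_def by (rule same_ker_unimod) (rule ker_equiv[OF sc])
  have e2: "unimodular_complex n (alexander_dual n C) \<longleftrightarrow> unimodular_matrix (alexander_dual n C) (cx_columns n) chi"
    unfolding unimodular_complex_def by (rule same_ker_unimod) (rule ker_equiv[OF dual_sc[OF sc]])
  have sq: "chi {1..n} c * chi {1..n} c = 1" for c by simp
  have tw: "in_int_kernel (Pow {1..n} - C) (cx_columns n) chi y \<longleftrightarrow>
      in_int_kernel (alexander_dual n C) (cx_columns n) chi (\<lambda>c. chi {1..n} c * y c)" for y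
  proof -
    have "(\<lambda>c. chi {1..n} c * (chi {1..n} c * y c)) = y" by (rule ext) (simp add: mult.assoc[symmetric])
    then show ?thesis using twist_ker[OF sc, of "\<lambda>c. chi {1..n} c * y c"] by simp
  qed
  have e3: "unimodular_matrix (alexander_dual n C) (cx_columns n) chi \<longleftrightarrow> unimodular_matrix (Pow {1..n} - C) (cx_columns n) chi"
    using twist_unimod[OF twist_ker[OF sc] sq] twist_unimod[OF tw sq] by blast
  have bk: "Pow {1..n} - (Pow {1..n} - C) = C" using sub by auto
  have e4: "unimodular_matrix C (cx_columns n) chi \<longleftrightarrow> unimodular_matrix (Pow {1..n} - C) (cx_columns n) chi"
    using dual_unimodular[OF sub] dual_unimodular[of "Pow {1..n} - C"] bk by auto
  show ?thesis using e1 e2 e3 e4 by simp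
qed


end
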